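(* Let $G$ be a connected block graph on $n$ vertices with set of cut vertices $V_c(G)$ and $k$ an integer with $2\le k\le n$. Then $$SW_k(G)=\sum_{v\in V_c(G)} B_k(v) + (k-1)\binom{n}{k}.$$
   Context: A block graph is a graph in which every block (maximal connected induced subgraph without cut vertices) is a clique. For connected $G$ and $S\subseteq V(G)$, the Steiner distance $d(S)$ is the minimum number of edges of a connected subgraph whose vertex set contains $S$; such a minimum subgraph is a tree, called a Steiner tree for $S$; vertices of $S$ are its terminal vertices and the other vertices its inner vertices. $SW_k(G)=\sum_{S\subseteq V(G),|S|=k} d(S)$. The $k$-Steiner betweenness centrality of $v$ is $$B_k(v)=\sum_{A\subseteq V(G)\setminus\{v\},\ |A|=k}\frac{\sigma_A(v)}{\sigma_A},$$ where $\sigma_A$ is the number of Steiner trees for $A$ and $\sigma_A(v)$ is the number of those containing $v$ as an inner vertex. *)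

theory Defs
  imports Main "HOL-Library.Disjoint_Sets" Complex_Main
begin

definition graph :: "'a set \<Rightarrow> 'a set set \<Rightarrow> bool" where
  "graph V E \<longleftrightarrow> finite V \<and> (\<forall>e\<in>E. e \<subseteq> V \<and> card e = 2)"

text \<open>W is connected using only edges of F between vertices of W
  (for W a vertex set of a subgraph with edge set F; for F = E this is
  connectivity of the induced subgraph on W).\<close>
definition conn_on :: "'a set \<Rightarrow> 'a set set \<Rightarrow> bool" where
  "conn_on W F \<longleftrightarrow>
     (\<forall>x\<in>W. \<forall>y\<in>W. (\<lambda>a b. {a, b} \<in> F \<and> a \<in> W \<and> b \<in> W)\<^sup>*\<^sup>* x y)"

definition connected_graph :: "'a set \<Rightarrow> 'a set set \<Rightarrow> bool" where
  "connected_graph V E \<longleftrightarrow> graph V E \<and> V \<noteq> {} \<and> conn_on V E"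

definition cut_vertex :: "'a set \<Rightarrow> 'a set set \<Rightarrow> 'a \<Rightarrow> bool" where
  "cut_vertex V E v \<longleftrightarrow> v \<in> V \<and> \<not> conn_on (V - {v}) E"

definition conn_no_cut :: "'a set set \<Rightarrow> 'a set \<Rightarrow> bool" where
  "conn_no_cut E W \<longleftrightarrow> W \<noteq> {} \<and> conn_on W E \<and> (\<forall>v\<in>W. conn_on (W - {v}) E)"

definition is_block :: "'a set \<Rightarrow> 'a set set \<Rightarrow> 'a set \<Rightarrow> bool" where
  "is_block V E W \<longleftrightarrow> W \<subseteq> V \<and> conn_no_cut E W \<and>
     (\<forall>W'. W \<subseteq> W' \<and> W' \<subseteq> V \<and> conn_no_cut E W' \<longrightarrow> W' = W)"

definition block_graph :: "'a set \<Rightarrow> 'a set set \<Rightarrow> bool" where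
  "block_graph V E \<longleftrightarrow> graph V E \<and>
     (\<forall>W. is_block V E W \<longrightarrow> (\<forall>x\<in>W. \<forall>y\<in>W. x \<noteq> y \<longrightarrow> {x, y} \<in> E))"

definition conn_subgraph_containing ::
  "'a set \<Rightarrow> 'a set set \<Rightarrow> 'a set \<Rightarrow> 'a set \<Rightarrow> 'a set set \<Rightarrow> bool" where
  "conn_subgraph_containing V E S W F \<longleftrightarrow>
     W \<subseteq> V \<and> F \<subseteq> E \<and> (\<forall>e\<in>F. e \<subseteq> W) \<and> conn_on W F \<and> S \<subseteq> W"

definition steiner_dist :: "'a set \<Rightarrow> 'a set set \<Rightarrow> 'a set \<Rightarrow> nat" where
  "steiner_dist V E S =
     (LEAST m. \<exists>W F. conn_subgraph_containing V E S W F \<and> card F = m)"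

definition steiner_trees :: "'a set \<Rightarrow> 'a set set \<Rightarrow> 'a set \<Rightarrow> ('a set \<times> 'a set set) set" where
  "steiner_trees V E S =
     {(W, F). conn_subgraph_containing V E S W F \<and> card F = steiner_dist V E S}"

definition steiner_wiener :: "'a set \<Rightarrow> 'a set set \<Rightarrow> nat \<Rightarrow> nat" where
  "steiner_wiener V E k = (\<Sum>S\<in>{S. S \<subseteq> V \<and> card S = k}. steiner_dist V E S)"

text \<open>k-Steiner betweenness centrality. Since v is not in A, v is an inner
  vertex of a Steiner tree (W,F) for A iff v is in W.\<close>
definition steiner_betweenness :: "'a set \<Rightarrow> 'a set set \<Rightarrow> nat \<Rightarrow> 'a \<Rightarrow> real" where
  "steiner_betweenness V E k v =
     (\<Sum>A\<in>{A. A \<subseteq> V - {v} \<and> card A = k}.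
        real (card {(W, F) \<in> steiner_trees V E A. v \<in> W \<and> v \<notin> A})
        / real (card (steiner_trees V E A)))"

end

theory Submission
  imports Defs "HOL-Library.Transitive_Closure_Table"
begin


definition rel :: "'a set set \<Rightarrow> 'a set \<Rightarrow> 'a \<Rightarrow> 'a \<Rightarrow> bool" where
  "rel F W = (\<lambda>a b. {a, b} \<in> F \<and> a \<in> W \<and> b \<in> W)"

lemma rel_iff[simp]: "rel F W a b \<longleftrightarrow> {a, b} \<in> F \<and> a \<in> W \<and> b \<in> W"
  by (simp add: rel_def)

lemma conn_on_rel: "conn_on W F \<longleftrightarrow> (\<forall>x\<in>W. \<forall>y\<in>W. (rel F W)\<^sup>*\<^sup>* x y)"
  unfolding conn_on_def rel_def by simp

lemma rel_sym: "rel F W a b \<Longrightarrow> rel F W b a"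
  by (simp add: insert_commute)

lemma rel_rtc_sym: "(rel F W)\<^sup>*\<^sup>* a b \<Longrightarrow> (rel F W)\<^sup>*\<^sup>* b a"
proof (induction rule: rtranclp_induct)
  case base then show ?case by simp
next
  case (step y z)
  then show ?case by (meson converse_rtranclp_into_rtranclp rel_sym)
qed

lemma rel_rtc_mem: "(rel F W)\<^sup>*\<^sup>* a b \<Longrightarrow> a = b \<or> (a \<in> W \<and> b \<in> W)"
  by (induction rule: rtranclp_induct) auto

lemma rel_rtc_mono: "(rel F W)\<^sup>*\<^sup>* a b \<Longrightarrow> F \<subseteq> F' \<Longrightarrow> W \<subseteq> W' \<Longrightarrow> (rel F' W')\<^sup>*\<^sup>* a b"
proof (induction rule: rtranclp_induct)
  case base then show ?case by simp
next
  case (step y z)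
  then have "rel F' W' y z" by auto
  with step show ?case by (meson rtranclp.rtrancl_into_rtrancl)
qed

lemma conn_hub:
  assumes "\<forall>u\<in>W. (rel F W)\<^sup>*\<^sup>* u h"
  shows "conn_on W F"
  unfolding conn_on_rel
proof (intro ballI)
  fix x y assume "x \<in> W" "y \<in> W"
  then have "(rel F W)\<^sup>*\<^sup>* x h" "(rel F W)\<^sup>*\<^sup>* y h" using assms by auto
  then show "(rel F W)\<^sup>*\<^sup>* x y" using rel_rtc_sym[of F W y h] rtranclp_trans[of "rel F W" x h y] by blast
qed

lemma crossing:
  assumes "(rel F W)\<^sup>*\<^sup>* r u" "r \<in> S" "u \<notin> S"
  shows "\<exists>a b. {a, b} \<in> F \<and> a \<in> S \<and> b \<in> W \<and> b \<notin> S"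
proof -
  have "v \<in> S \<or> (\<exists>a b. {a, b} \<in> F \<and> a \<in> S \<and> b \<in> W \<and> b \<notin> S)" if "(rel F W)\<^sup>*\<^sup>* r v" for v
    using that
  proof (induction rule: rtranclp_induct)
    case base then show ?case using assms by simp
  next
    case (step y z) then show ?case by auto
  qed
  then show ?thesis using assms by blast
qed

lemma spanning_aux:
  assumes fin: "finite W" and r: "r \<in> W" and cW: "conn_on W F" and FW: "\<forall>e\<in>F. e \<subseteq> W"
  shows "1 \<le> n \<Longrightarrow> n \<le> card W \<Longrightarrow> \<exists>S T. S \<subseteq> W \<and> r \<in> S \<and> card S = n \<and> T \<subseteq> F \<and>
           (\<forall>e\<in>T. e \<subseteq> S) \<and> card T = n - 1 \<and> conn_on S T"
proof (induction n)
  case 0 then show ?case by simp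
next
  case (Suc n)
  show ?case
  proof (cases "n = 0")
    case True
    have "conn_on {r} {}" unfolding conn_on_def by simp
    then show ?thesis using True r by (intro exI[of _ "{r}"] exI[of _ "{}"]) auto
  next
    case False
    then obtain S T where S: "S \<subseteq> W" "r \<in> S" "card S = n" "T \<subseteq> F" "\<forall>e\<in>T. e \<subseteq> S"
      "card T = n - 1" "conn_on S T" using Suc.IH Suc.prems False by fastforce
    have "S \<noteq> W" using S(3) Suc.prems by auto
    then obtain u where u: "u \<in> W" "u \<notin> S" using S(1) by blast
    have "(rel F W)\<^sup>*\<^sup>* r u" using cW r u unfolding conn_on_rel by blast
    then obtain a b where ab: "{a, b} \<in> F" "a \<in> S" "b \<in> W" "b \<notin> S"
      using crossing[OF _ S(2) u(2)] by blast
    have "F \<subseteq> Pow W" using FW by auto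
    then have finF: "finite F" using fin by (meson finite_Pow_iff finite_subset)
    have finT: "finite T" using S(4) finF finite_subset by blast
    have finS: "finite S" using S(1) fin finite_subset by blast
    have nT: "{a, b} \<notin> T" using S(5) ab(4) by auto
    have cS': "card (insert b S) = Suc n" using finS ab(4) S(3) by simp
    have cT': "card (insert {a, b} T) = Suc n - 1" using finT nT S(6) False by simp
    have conn': "conn_on (insert b S) (insert {a, b} T)"
    proof (rule conn_hub[where h = r], intro ballI)
      fix z assume z: "z \<in> insert b S"
      have "(rel T S)\<^sup>*\<^sup>* a r" using S(7) ab(2) S(2) unfolding conn_on_rel by blast
      then have rr: "(rel (insert {a, b} T) (insert b S))\<^sup>*\<^sup>* a r"
        by (rule rel_rtc_mono[OF _ subset_insertI subset_insertI])
      show "(rel (insert {a, b} T) (insert b S))\<^sup>*\<^sup>* z r"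
      proof (cases "z = b")
        case True
        have "rel (insert {a, b} T) (insert b S) b a" using ab by (auto simp: insert_commute)
        then show ?thesis using True rr by (meson converse_rtranclp_into_rtranclp)
      next
        case False
        then have "z \<in> S" using z by auto
        then have "(rel T S)\<^sup>*\<^sup>* z r" using S(7) S(2) unfolding conn_on_rel by blast
        then show ?thesis by (rule rel_rtc_mono[OF _ subset_insertI subset_insertI])
      qed
    qed
    show ?thesis
    proof (rule exI[of _ "insert b S"], rule exI[of _ "insert {a, b} T"], intro conjI)
      show "insert {a, b} T \<subseteq> F" using S(4) ab(1) by blast
      show "\<forall>e\<in>insert {a, b} T. e \<subseteq> insert b S" using S(5) ab(2) by blast
      show "insert b S \<subseteq> W" using S(1) ab(3) by simp
      show "r \<in> insert b S" using S(2) by simp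
    qed (fact cS' cT' conn')+
  qed
qed

lemma spanning:
  assumes fin: "finite W" and ne: "W \<noteq> {}" and cW: "conn_on W F" and FW: "\<forall>e\<in>F. e \<subseteq> W"
  shows "\<exists>T\<subseteq>F. (\<forall>e\<in>T. e \<subseteq> W) \<and> card T = card W - 1 \<and> conn_on W T"
proof -
  obtain r where r: "r \<in> W" using ne by blast
  have "card W > 0" using fin ne by (simp add: card_gt_0_iff)
  then have "1 \<le> card W" by linarith
  then obtain S T where S: "S \<subseteq> W" "r \<in> S" "card S = card W" "T \<subseteq> F"
      "\<forall>e\<in>T. e \<subseteq> S" "card T = card W - 1" "conn_on S T"
    using spanning_aux[OF fin r cW FW \<open>1 \<le> card W\<close> order_refl] by (elim exE conjE) blast
  have "S = W" by (rule card_subset_eq[OF fin S(1) S(3)])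
  show ?thesis
    apply (rule exI[of _ T])
    using S(4,5,6,7) \<open>S = W\<close> by simp
qed



lemma path_set: "rtrancl_path (rel F T) x xs y \<Longrightarrow> set xs \<subseteq> T \<and> (xs \<noteq> [] \<longrightarrow> x \<in> T)"
  by (induction rule: rtrancl_path.induct) auto

lemma path_conn: "rtrancl_path (rel F T) x xs y \<Longrightarrow> \<forall>z\<in>set (x # xs). (rel F (set (x # xs)))\<^sup>*\<^sup>* z y"
proof (induction rule: rtrancl_path.induct)
  case (base x) then show ?case by simp
next
  case (step x y ys z)
  have sub: "set (y # ys) \<subseteq> set (x # y # ys)" by auto
  show ?case
  proof
    fix w assume w: "w \<in> set (x # y # ys)"
    show "(rel F (set (x # y # ys)))\<^sup>*\<^sup>* w z"
    proof (cases "w = x")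
      case True
      have "rel F (set (x # y # ys)) x y" using step.hyps(1) by simp
      moreover have "(rel F (set (y # ys)))\<^sup>*\<^sup>* y z" using step.IH list.set_intros(1)[of y ys] by blast
      then have "(rel F (set (x # y # ys)))\<^sup>*\<^sup>* y z" using rel_rtc_mono[OF _ order_refl sub] by blast
      ultimately show ?thesis using True by (meson converse_rtranclp_into_rtranclp)
    next
      case False
      then have "w \<in> set (y # ys)" using w by simp
      then have "(rel F (set (y # ys)))\<^sup>*\<^sup>* w z" using step.IH by blast
      then show ?thesis using rel_rtc_mono[OF _ order_refl sub] by blast
    qed
  qed
qed

lemma path_cut: "rtrancl_path (rel F T) x xs y \<Longrightarrow> distinct (x # xs) \<Longrightarrow>
   \<forall>z\<in>set (x # xs) - {u}. (rel F (set (x # xs) - {u}))\<^sup>*\<^sup>* z x \<or> (rel F (set (x # xs) - {u}))\<^sup>*\<^sup>* z y"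
proof (induction rule: rtrancl_path.induct)
  case (base x) then show ?case by simp
next
  case (step x y1 ys y)
  let ?S = "set (x # y1 # ys) - {u}"
  let ?Q = "set (y1 # ys)"
  have dQ: "distinct (y1 # ys)" and xQ: "x \<notin> ?Q" using step.prems by auto
  have IH: "\<forall>z\<in>?Q - {u}. (rel F (?Q - {u}))\<^sup>*\<^sup>* z y1 \<or> (rel F (?Q - {u}))\<^sup>*\<^sup>* z y"
    by (rule step.IH[OF dQ])
  have sub: "?Q - {u} \<subseteq> ?S" by auto
  show ?case
  proof
    fix z assume z: "z \<in> ?S"
    show "(rel F ?S)\<^sup>*\<^sup>* z x \<or> (rel F ?S)\<^sup>*\<^sup>* z y"
    proof (cases "z = x")
      case True then show ?thesis by blast
    next
      case zx: False
      then have zQ: "z \<in> ?Q - {u}" using z by auto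
      show ?thesis
      proof (cases "u = x")
        case True
        have zQ': "z \<in> ?Q" using zQ by blast
        have A1: "(rel F ?Q)\<^sup>*\<^sup>* z y" using bspec[OF path_conn[OF step.hyps(2)] zQ'] .
        have A2: "?Q \<subseteq> ?S" using True xQ by auto
        have "(rel F ?S)\<^sup>*\<^sup>* z y" by (rule rel_rtc_mono[OF A1 order_refl A2])
        then show ?thesis by blast
      next
        case ux: False
        from IH zQ consider "(rel F (?Q - {u}))\<^sup>*\<^sup>* z y1" | "(rel F (?Q - {u}))\<^sup>*\<^sup>* z y" by blast
        then show ?thesis
        proof cases
          case 1
          then have y1: "y1 \<in> ?Q - {u}" using rel_rtc_mem[OF 1] zQ by blast
          have "(rel F ?S)\<^sup>*\<^sup>* z y1" using rel_rtc_mono[OF 1 order_refl sub] .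
          moreover have "rel F ?S y1 x" using step.hyps(1) y1 ux by (auto simp: insert_commute)
          ultimately show ?thesis by (meson rtranclp.rtrancl_into_rtrancl)
        next
          case 2 then show ?thesis using rel_rtc_mono[OF 2 order_refl sub] by blast
        qed
      qed
    qed
  qed
qed

lemma cyc_nocut:
  assumes p: "rtrancl_path (rel E T) x xs y" and d: "distinct (x # xs)"
    and w: "w \<notin> set (x # xs)" and wx: "{w, x} \<in> E" and wy: "{w, y} \<in> E" and xy: "x \<noteq> y"
  shows "conn_no_cut E (insert w (set (x # xs)))"
proof -
  let ?P = "set (x # xs)"
  let ?C = "insert w ?P"
  have yP: "y \<in> ?P"
  proof (cases xs)
    case Nil then show ?thesis using p xy by (auto elim: rtrancl_path.cases)
  next
    case (Cons a l)
    then have "last xs = y" using rtrancl_path_last[OF p] by simp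
    moreover have "last xs \<in> set xs" using Cons last_in_set by blast
    ultimately show ?thesis by simp
  qed
  have pc: "\<forall>z\<in>?P. (rel E ?P)\<^sup>*\<^sup>* z y" using path_conn[OF p] .
  have c1: "conn_on ?C E"
  proof (rule conn_hub[where h = y], intro ballI)
    fix z assume z: "z \<in> ?C"
    show "(rel E ?C)\<^sup>*\<^sup>* z y"
    proof (cases "z = w")
      case True
      have "rel E ?C w y" using wy yP by simp
      then show ?thesis unfolding True by (rule r_into_rtranclp)
    next
      case False
      then have "z \<in> ?P" using z by simp
      then have "(rel E ?P)\<^sup>*\<^sup>* z y" using pc by blast
      then show ?thesis by (rule rel_rtc_mono[OF _ order_refl subset_insertI])
    qed
  qed
  have c2: "conn_on (?C - {v}) E" if v: "v \<in> ?C" for v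
  proof (cases "v = w")
    case True
    then have eq: "?C - {v} = ?P" using w by auto
    show ?thesis unfolding eq by (rule conn_hub[where h = y], fact pc)
  next
    case False
    then have vP: "v \<in> ?P" using v by simp
    have eq: "?C - {v} = insert w (?P - {v})" using False by auto
    have pcut: "\<forall>z\<in>?P - {v}. (rel E (?P - {v}))\<^sup>*\<^sup>* z x \<or> (rel E (?P - {v}))\<^sup>*\<^sup>* z y"
      using path_cut[OF p d] by blast
    show ?thesis unfolding eq
    proof (rule conn_hub[where h = w], intro ballI)
      fix z assume z: "z \<in> insert w (?P - {v})"
      show "(rel E (insert w (?P - {v})))\<^sup>*\<^sup>* z w"
      proof (cases "z = w")
        case True then show ?thesis by blast
      next
        case False
        then have zP: "z \<in> ?P - {v}" using z by simp
        from pcut zP consider "(rel E (?P - {v}))\<^sup>*\<^sup>* z x" | "(rel E (?P - {v}))\<^sup>*\<^sup>* z y" by blast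
        then show ?thesis
        proof cases
          case 1
          then have xin: "x \<in> ?P - {v}" using rel_rtc_mem[OF 1] zP by blast
          have "(rel E (insert w (?P - {v})))\<^sup>*\<^sup>* z x" using rel_rtc_mono[OF 1 order_refl subset_insertI] .
          moreover have "rel E (insert w (?P - {v})) x w" using wx xin by (auto simp: insert_commute)
          ultimately show ?thesis by (meson rtranclp.rtrancl_into_rtrancl)
        next
          case 2
          then have yin: "y \<in> ?P - {v}" using rel_rtc_mem[OF 2] zP by blast
          have "(rel E (insert w (?P - {v})))\<^sup>*\<^sup>* z y" using rel_rtc_mono[OF 2 order_refl subset_insertI] .
          moreover have "rel E (insert w (?P - {v})) y w" using wy yin by (auto simp: insert_commute)
          ultimately show ?thesis by (meson rtranclp.rtrancl_into_rtrancl)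
        qed
      qed
    qed
  qed
  show ?thesis unfolding conn_no_cut_def using c1 c2 by blast
qed

lemma clique_of_nocut:
  assumes bg: "block_graph V E" and CV: "C \<subseteq> V" and cnc: "conn_no_cut E C"
    and a: "a \<in> C" and b: "b \<in> C" and ab: "a \<noteq> b"
  shows "{a, b} \<in> E"
proof -
  have finV: "finite V" using bg unfolding block_graph_def graph_def by blast
  define M where "M = {W'. C \<subseteq> W' \<and> W' \<subseteq> V \<and> conn_no_cut E W'}"
  have "M \<subseteq> Pow V" unfolding M_def by blast
  then have finM: "finite M" by (rule finite_subset) (simp add: finV)
  have CM: "C \<in> M" using CV cnc unfolding M_def by blast
  define m where "m = Max (card ` M)"
  have fi: "finite (card ` M)" using finM by (rule finite_imageI)
  have ne: "card ` M \<noteq> {}" using CM by blast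
  have "m \<in> card ` M" unfolding m_def using Max_in[OF fi ne] .
  then obtain B where BM: "B \<in> M" and Bm: "card B = m" by blast
  have Bmax: "card X \<le> card B" if "X \<in> M" for X
  proof -
    have "card X \<in> card ` M" using that by blast
    then show ?thesis unfolding Bm m_def by (rule Max_ge[OF fi])
  qed
  have BM': "C \<subseteq> B" "B \<subseteq> V" "conn_no_cut E B" using BM unfolding M_def by blast+
  have blk: "is_block V E B"
    unfolding is_block_def
  proof (intro conjI allI impI)
    show "B \<subseteq> V" by (fact BM'(2))
    show "conn_no_cut E B" by (fact BM'(3))
    fix W' assume W': "B \<subseteq> W' \<and> W' \<subseteq> V \<and> conn_no_cut E W'"
    then have "W' \<in> M" using BM'(1) unfolding M_def by blast
    then have le: "card W' \<le> card B" by (rule Bmax)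
    have fW: "finite W'" using W' finV by (meson rev_finite_subset)
    have "B = W'" using card_seteq[OF fW _ le] W' by blast
    then show "W' = B" by simp
  qed
  have aB: "a \<in> B" and bB: "b \<in> B" using a b BM'(1) by blast+
  have "\<forall>x\<in>B. \<forall>y\<in>B. x \<noteq> y \<longrightarrow> {x, y} \<in> E"
    using bg blk unfolding block_graph_def by blast
  then show ?thesis using aB bB ab by blast
qed



definition sep :: "'a set \<Rightarrow> 'a set set \<Rightarrow> 'a set \<Rightarrow> 'a set" where
  "sep V E A = {c \<in> V - A. \<exists>a1\<in>A. \<exists>a2\<in>A. \<not> (rel E (V - {c}))\<^sup>*\<^sup>* a1 a2}"

locale bgr =
  fixes V :: "'a set" and E :: "'a set set"
  assumes cg: "connected_graph V E" and bg: "block_graph V E"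
begin

lemma gr: "graph V E" using cg unfolding connected_graph_def by blast
lemma finV: "finite V" using gr unfolding graph_def by blast
lemma edge_sub: "e \<in> E \<Longrightarrow> e \<subseteq> V" using gr unfolding graph_def by blast
lemma edge_card: "e \<in> E \<Longrightarrow> card e = 2" using gr unfolding graph_def by blast
lemma edge_neq: "{a, b} \<in> E \<Longrightarrow> a \<noteq> b"
proof
  assume "{a, b} \<in> E" "a = b"
  then have "card {a, b} = 2" using edge_card by blast
  then show False using \<open>a = b\<close> by simp
qed
lemma finE: "finite E"
proof -
  have "E \<subseteq> Pow V" using edge_sub by blast
  then show ?thesis by (rule finite_subset) (simp add: finV)
qed
lemma connV: "conn_on V E" using cg unfolding connected_graph_def by blast

lemma nbr_adj:
  assumes wx: "{w, x} \<in> E" and wy: "{w, y} \<in> E" and xy: "x \<noteq> y"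
    and c: "(rel E (V - {w}))\<^sup>*\<^sup>* x y"
  shows "{x, y} \<in> E"
proof -
  obtain xs where "rtrancl_path (rel E (V - {w})) x xs y" using c rtranclp_eq_rtrancl_path by metis
  then obtain xs' where p: "rtrancl_path (rel E (V - {w})) x xs' y" and d: "distinct (x # xs')"
    using rtrancl_path_distinct by metis
  have ne: "xs' \<noteq> []"
  proof
    assume "xs' = []"
    then have "x = y" using p by (auto elim: rtrancl_path.cases)
    then show False using xy by simp
  qed
  have ps: "set xs' \<subseteq> V - {w}" "x \<in> V - {w}" using path_set[OF p] ne by blast+
  have w: "w \<notin> set (x # xs')" using ps by auto
  have wV: "w \<in> V" using edge_sub[OF wx] by blast
  have CV: "insert w (set (x # xs')) \<subseteq> V" using ps wV by auto
  have cnc: "conn_no_cut E (insert w (set (x # xs')))" by (rule cyc_nocut[OF p d w wx wy xy])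
  have yin: "y \<in> set (x # xs')"
  proof -
    have "last xs' = y" using rtrancl_path_last[OF p ne] .
    moreover have "last xs' \<in> set xs'" using ne by (rule last_in_set)
    ultimately show ?thesis by simp
  qed
  show ?thesis by (rule clique_of_nocut[OF bg CV cnc]) (use yin xy in auto)
qed

abbreviation "d A \<equiv> steiner_dist V E A"
abbreviation "ST A \<equiv> steiner_trees V E A"

lemma st_props:
  assumes "(W, F) \<in> ST A"
  shows "W \<subseteq> V" "F \<subseteq> E" "\<forall>e\<in>F. e \<subseteq> W" "conn_on W F" "A \<subseteq> W" "card F = d A"
  using assms unfolding steiner_trees_def conn_subgraph_containing_def by blast+

lemma d_le: "conn_subgraph_containing V E A W F \<Longrightarrow> d A \<le> card F"
  unfolding steiner_dist_def by (rule Least_le) blast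

lemma st_ex:
  assumes "A \<subseteq> V"
  shows "\<exists>W F. (W, F) \<in> ST A"
proof -
  have "conn_subgraph_containing V E A V E"
    unfolding conn_subgraph_containing_def using assms edge_sub connV by blast
  then have ex: "\<exists>m. \<exists>W F. conn_subgraph_containing V E A W F \<and> card F = m" by blast
  have "\<exists>W F. conn_subgraph_containing V E A W F \<and> card F = d A"
    unfolding steiner_dist_def by (rule LeastI_ex[OF ex])
  then show ?thesis unfolding steiner_trees_def by blast
qed

lemma st_fin: "finite (ST A)"
proof -
  have "ST A \<subseteq> Pow V \<times> Pow E"
  proof
    fix p assume p: "p \<in> ST A"
    obtain W F where pe: "p = (W, F)" by (cases p)
    show "p \<in> Pow V \<times> Pow E" using st_props(1,2)[of W F A] p pe by auto
  qed
  then show ?thesis by (rule finite_subset) (simp add: finV finE)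
qed

lemma st_card:
  assumes st: "(W, F) \<in> ST A" and ne: "A \<noteq> {}"
  shows "card F = card W - 1"
proof -
  note P = st_props[OF st]
  have fW: "finite W" using P(1) finV by (meson rev_finite_subset)
  have fF: "finite F" using P(2) finE by (meson rev_finite_subset)
  have Wne: "W \<noteq> {}" using P(5) ne by blast
  obtain T where T: "T \<subseteq> F" "\<forall>e\<in>T. e \<subseteq> W" "card T = card W - 1" "conn_on W T"
    using spanning[OF fW Wne P(4) P(3)] by (elim exE conjE) blast
  have "conn_subgraph_containing V E A W T"
    unfolding conn_subgraph_containing_def using P T by blast
  then have "d A \<le> card T" by (rule d_le)
  moreover have "card T \<le> card F" using T(1) fF by (rule card_mono[rotated])
  ultimately show ?thesis using P(6) T(3) by linarith
qed

end



context bgr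
begin

lemma two_elem: "e \<in> E \<Longrightarrow> c \<in> e \<Longrightarrow> \<exists>x. e = {c, x} \<and> x \<noteq> c"
proof -
  assume e: "e \<in> E" and c: "c \<in> e"
  have "card e = 2" using edge_card[OF e] .
  then obtain a b where ab: "e = {a, b}" "a \<noteq> b" by (meson card_2_iff)
  show ?thesis
  proof (cases "c = a")
    case True then show ?thesis using ab by blast
  next
    case False then have "c = b" using c ab by blast
    then show ?thesis using ab by (auto simp: insert_commute)
  qed
qed

lemma replace:
  assumes st: "(W, F) \<in> ST A" and Ane: "A \<noteq> {}" and cW: "c \<in> W" and cA: "c \<notin> A"
    and cl: "\<And>x y. {c, x} \<in> F \<Longrightarrow> {c, y} \<in> F \<Longrightarrow> x \<noteq> y \<Longrightarrow> {x, y} \<in> E"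
  shows False
proof -
  note P = st_props[OF st]
  have fF: "finite F" using P(2) finE by (meson rev_finite_subset)
  have fW: "finite W" using P(1) finV by (meson rev_finite_subset)
  define N where "N = {x. {c, x} \<in> F}"
  have NW: "N \<subseteq> W - {c}"
  proof
    fix x assume "x \<in> N"
    then have xF: "{c, x} \<in> F" unfolding N_def by blast
    then have "x \<in> W" using P(3) by blast
    moreover have "x \<noteq> c" using edge_neq xF P(2) by blast
    ultimately show "x \<in> W - {c}" by blast
  qed
  have fN: "finite N" using NW fW by (meson finite_Diff rev_finite_subset)
  obtain a where aA: "a \<in> A" using Ane by blast
  have ac: "a \<noteq> c" using aA cA by blast
  have "(rel F W)\<^sup>*\<^sup>* c a" using P(4) P(5) aA cW unfolding conn_on_rel by blast
  then obtain b where "rel F W c b" using ac by (metis converse_rtranclpE)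
  then have bN: "b \<in> N" unfolding N_def by simp
  then obtain x0 where x0: "x0 \<in> N" by blast
  have x0W: "x0 \<in> W - {c}" using x0 NW by blast
  define F' where "F' = {e \<in> F. c \<notin> e} \<union> (\<lambda>y. {x0, y}) ` (N - {x0})"
  define W' where "W' = W - {c}"
  have F'E: "F' \<subseteq> E"
  proof
    fix e assume "e \<in> F'"
    then consider "e \<in> F" | y where "y \<in> N - {x0}" "e = {x0, y}" unfolding F'_def by blast
    then show "e \<in> E"
    proof cases
      case 1 then show ?thesis using P(2) by blast
    next
      case 2
      have "{c, x0} \<in> F" "{c, y} \<in> F" using x0 2(1) unfolding N_def by blast+
      then show ?thesis using cl 2 by blast
    qed
  qed
  have F'W: "\<forall>e\<in>F'. e \<subseteq> W'"
  proof
    fix e assume "e \<in> F'"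
    then consider "e \<in> F" "c \<notin> e" | y where "y \<in> N - {x0}" "e = {x0, y}" unfolding F'_def by blast
    then show "e \<subseteq> W'"
    proof cases
      case 1 then show ?thesis using P(3) unfolding W'_def by blast
    next
      case 2 then show ?thesis using NW x0W unfolding W'_def by blast
    qed
  qed
  define f where "f = (\<lambda>v. if v = c then x0 else v)"
  have map: "(rel F' W')\<^sup>*\<^sup>* (f u) (f v)" if "(rel F W)\<^sup>*\<^sup>* u v" for u v
    using that
  proof (induction rule: rtranclp_induct)
    case base then show ?case by blast
  next
    case (step y z)
    have yz: "{y, z} \<in> F" "y \<in> W" "z \<in> W" using step.hyps(2) by auto
    have nyz: "y \<noteq> z" using edge_neq yz(1) P(2) by blast
    have "rel F' W' (f y) (f z) \<or> f y = f z"
    proof (cases "y = c")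
      case True
      then have zc: "z \<noteq> c" using nyz by blast
      have zN: "z \<in> N" using yz(1) True unfolding N_def by blast
      show ?thesis
      proof (cases "z = x0")
        case True then show ?thesis unfolding f_def using zc \<open>y = c\<close> by simp
      next
        case False
        have "{x0, z} \<in> F'" unfolding F'_def using zN False by blast
        moreover have "x0 \<in> W'" "z \<in> W'" using x0W zN NW unfolding W'_def by blast+
        ultimately show ?thesis unfolding f_def using zc \<open>y = c\<close> by simp
      qed
    next
      case yc: False
      show ?thesis
      proof (cases "z = c")
        case True
        have yN: "y \<in> N" using yz(1) True unfolding N_def by (simp add: insert_commute)
        show ?thesis
        proof (cases "y = x0")
          case True then show ?thesis unfolding f_def using yc \<open>z = c\<close> by simp
        next
          case False
          have "{x0, y} \<in> F'" unfolding F'_def using yN False by blast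
          then have "{y, x0} \<in> F'" by (simp add: insert_commute)
          moreover have "x0 \<in> W'" "y \<in> W'" using x0W yN NW unfolding W'_def by blast+
          ultimately show ?thesis unfolding f_def using yc \<open>z = c\<close> by simp
        qed
      next
        case zc: False
        have "{y, z} \<in> F'" unfolding F'_def using yz(1) yc zc by blast
        moreover have "y \<in> W'" "z \<in> W'" using yz yc zc unfolding W'_def by blast+
        ultimately show ?thesis unfolding f_def using yc zc by simp
      qed
    qed
    then show ?case using step.IH by (metis rtranclp.rtrancl_into_rtrancl)
  qed
  have connW': "conn_on W' F'"
  proof (rule conn_hub[where h = x0], intro ballI)
    fix u assume u: "u \<in> W'"
    have "(rel F W)\<^sup>*\<^sup>* u x0" using P(4) u x0W unfolding conn_on_rel W'_def by blast
    then have "(rel F' W')\<^sup>*\<^sup>* (f u) (f x0)" by (rule map)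
    moreover have "f u = u" "f x0 = x0" using u x0W unfolding f_def W'_def by auto
    ultimately show "(rel F' W')\<^sup>*\<^sup>* u x0" by simp
  qed
  have "conn_subgraph_containing V E A W' F'"
    unfolding conn_subgraph_containing_def
    using P(1) P(5) cA F'E F'W connW' unfolding W'_def by blast
  then have le: "d A \<le> card F'" by (rule d_le)
  have star: "{e \<in> F. c \<in> e} = (\<lambda>x. {c, x}) ` N"
  proof
    show "{e \<in> F. c \<in> e} \<subseteq> (\<lambda>x. {c, x}) ` N"
    proof
      fix e assume e: "e \<in> {e \<in> F. c \<in> e}"
      then obtain x where "e = {c, x}" using two_elem P(2) by blast
      then show "e \<in> (\<lambda>x. {c, x}) ` N" using e unfolding N_def by blast
    qed
    show "(\<lambda>x. {c, x}) ` N \<subseteq> {e \<in> F. c \<in> e}" unfolding N_def by blast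
  qed
  have inj: "inj_on (\<lambda>x. {c, x}) N"
  proof
    fix x y assume "x \<in> N" "y \<in> N" "{c, x} = {c, y}"
    then show "x = y" using NW by (metis Diff_iff doubleton_eq_iff insertCI subsetD)
  qed
  have cstar: "card {e \<in> F. c \<in> e} = card N" unfolding star using inj by (rule card_image)
  have split: "card F = card {e \<in> F. c \<in> e} + card {e \<in> F. c \<notin> e}"
  proof -
    have "F = {e \<in> F. c \<in> e} \<union> {e \<in> F. c \<notin> e}" by blast
    moreover have "{e \<in> F. c \<in> e} \<inter> {e \<in> F. c \<notin> e} = {}" by blast
    moreover have "finite {e \<in> F. c \<in> e}" "finite {e \<in> F. c \<notin> e}" using fF by auto
    ultimately show ?thesis by (metis card_Un_disjoint)
  qed
  have "card F' \<le> card {e \<in> F. c \<notin> e} + card ((\<lambda>y. {x0, y}) ` (N - {x0}))"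
    unfolding F'_def by (rule card_Un_le)
  also have "card ((\<lambda>y. {x0, y}) ` (N - {x0})) \<le> card (N - {x0})" by (rule card_image_le) (use fN in blast)
  also have "card (N - {x0}) = card N - 1" using x0 fN by simp
  finally have "card F' \<le> card {e \<in> F. c \<notin> e} + (card N - 1)" by simp
  moreover have "card N \<ge> 1" using x0 fN by (metis One_nat_def Suc_leI card_gt_0_iff empty_iff)
  ultimately have "card F' < card F" using split cstar by linarith
  then show False using le P(6) by linarith
qed

end



context bgr
begin

lemma prune:
  assumes st: "(W, F) \<in> ST A" and cW: "c \<in> W" and cA: "c \<notin> A" and a0: "a0 \<in> A"
    and hA: "\<forall>a\<in>A. (rel E (V - {c}))\<^sup>*\<^sup>* a0 a"
    and x: "{c, x} \<in> F"
  shows "(rel E (V - {c}))\<^sup>*\<^sup>* a0 x"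
proof -
  note P = st_props[OF st]
  have fF: "finite F" using P(2) finE by (meson rev_finite_subset)
  define K where "K = {u. (rel E (V - {c}))\<^sup>*\<^sup>* a0 u}"
  have a0V: "a0 \<in> V - {c}" using a0 P(1) P(5) cA by blast
  have KV: "K \<subseteq> V - {c}"
  proof
    fix u assume "u \<in> K"
    then have "(rel E (V - {c}))\<^sup>*\<^sup>* a0 u" unfolding K_def by blast
    then have "a0 = u \<or> (a0 \<in> V - {c} \<and> u \<in> V - {c})" by (rule rel_rtc_mem)
    then show "u \<in> V - {c}" using a0V by blast
  qed
  define W' where "W' = {u \<in> W. u = c \<or> u \<in> K}"
  define F' where "F' = {e \<in> F. e \<subseteq> W'}"
  have cW': "c \<in> W'" using cW unfolding W'_def by blast
  have claim: "(v \<in> K \<and> (rel F' W')\<^sup>*\<^sup>* u v) \<or> (rel F' W')\<^sup>*\<^sup>* u c"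
    if "(rel F W)\<^sup>*\<^sup>* u v" "u \<in> K" for u v
    using that(1)
  proof (induction rule: rtranclp_induct)
    case base then show ?case using that(2) by blast
  next
    case (step y z)
    have yz: "{y, z} \<in> F" "y \<in> W" "z \<in> W" using step.hyps(2) by auto
    from step.IH show ?case
    proof
      assume h: "y \<in> K \<and> (rel F' W')\<^sup>*\<^sup>* u y"
      have yW': "y \<in> W'" using h yz unfolding W'_def by blast
      show ?case
      proof (cases "z = c")
        case True
        have "{y, z} \<in> F'" using yz yW' cW' True unfolding F'_def by blast
        then have "rel F' W' y z" using yW' cW' True by simp
        then show ?thesis using h True by (meson rtranclp.rtrancl_into_rtrancl)
      next
        case False
        have "z \<in> V" using yz P(1) by blast
        moreover have "{y, z} \<in> E" using yz P(2) by blast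
        moreover have "y \<in> V - {c}" using h KV by blast
        ultimately have "rel E (V - {c}) y z" using False by simp
        moreover have "(rel E (V - {c}))\<^sup>*\<^sup>* a0 y" using h unfolding K_def mem_Collect_eq by blast
        ultimately have "(rel E (V - {c}))\<^sup>*\<^sup>* a0 z" by (meson rtranclp.rtrancl_into_rtrancl)
        then have zK: "z \<in> K" unfolding K_def mem_Collect_eq .
        then have zW': "z \<in> W'" using yz unfolding W'_def by blast
        have "{y, z} \<in> F'" using yz yW' zW' unfolding F'_def by blast
        then have "rel F' W' y z" using yW' zW' by simp
        then show ?thesis using h zK by (meson rtranclp.rtrancl_into_rtrancl)
      qed
    next
      assume "(rel F' W')\<^sup>*\<^sup>* u c"
      then show ?case by blast
    qed
  qed
  have connW': "conn_on W' F'"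
  proof (rule conn_hub[where h = c], intro ballI)
    fix u assume u: "u \<in> W'"
    show "(rel F' W')\<^sup>*\<^sup>* u c"
    proof (cases "u = c")
      case True then show ?thesis by blast
    next
      case False
      then have uK: "u \<in> K" "u \<in> W" using u unfolding W'_def by blast+
      have "(rel F W)\<^sup>*\<^sup>* u c" using P(4) uK(2) cW unfolding conn_on_rel by blast
      then have "(c \<in> K \<and> (rel F' W')\<^sup>*\<^sup>* u c) \<or> (rel F' W')\<^sup>*\<^sup>* u c"
        by (rule claim[OF _ uK(1)])
      then show ?thesis by blast
    qed
  qed
  have AK: "A \<subseteq> K" using hA unfolding K_def by blast
  have "conn_subgraph_containing V E A W' F'"
    unfolding conn_subgraph_containing_def
  proof (intro conjI)
    show "W' \<subseteq> V" using P(1) unfolding W'_def by blast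
    show "F' \<subseteq> E" using P(2) unfolding F'_def by blast
    show "\<forall>e\<in>F'. e \<subseteq> W'" unfolding F'_def by blast
    show "conn_on W' F'" by (fact connW')
    show "A \<subseteq> W'" using AK P(5) unfolding W'_def by blast
  qed
  then have "d A \<le> card F'" by (rule d_le)
  then have le: "card F \<le> card F'" using P(6) by simp
  have sub: "F' \<subseteq> F" unfolding F'_def by blast
  have "F' = F" using card_seteq[OF fF sub le] .
  then have "{c, x} \<in> F'" using x by simp
  then have "{c, x} \<subseteq> W'" unfolding F'_def by blast
  then have "x \<in> W'" by blast
  moreover have "{c, x} \<in> E" using x P(2) by blast
  then have "x \<noteq> c" using edge_neq[of c x] by blast
  ultimately have "x \<in> K" unfolding W'_def by blast
  then show ?thesis unfolding K_def mem_Collect_eq .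
qed

lemma W_char:
  assumes st: "(W, F) \<in> ST A" and Ane: "A \<noteq> {}"
  shows "W = A \<union> sep V E A"
proof
  note P = st_props[OF st]
  show "A \<union> sep V E A \<subseteq> W"
  proof
    fix c assume c: "c \<in> A \<union> sep V E A"
    show "c \<in> W"
    proof (rule ccontr)
      assume cW: "c \<notin> W"
      then have "c \<in> sep V E A" using c P(5) by blast
      then obtain a1 a2 where a: "a1 \<in> A" "a2 \<in> A" "\<not> (rel E (V - {c}))\<^sup>*\<^sup>* a1 a2"
        unfolding sep_def by blast
      have "(rel F W)\<^sup>*\<^sup>* a1 a2" using P(4) P(5) a unfolding conn_on_rel by blast
      moreover have "W \<subseteq> V - {c}" using P(1) cW by blast
      ultimately have "(rel E (V - {c}))\<^sup>*\<^sup>* a1 a2" using rel_rtc_mono[OF _ P(2)] by blast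
      then show False using a(3) by blast
    qed
  qed
  show "W \<subseteq> A \<union> sep V E A"
  proof
    fix c assume cW: "c \<in> W"
    show "c \<in> A \<union> sep V E A"
    proof (rule ccontr)
      assume nc: "c \<notin> A \<union> sep V E A"
      then have cA: "c \<notin> A" by blast
      have cV: "c \<in> V" using cW P(1) by blast
      have all: "\<forall>a1\<in>A. \<forall>a2\<in>A. (rel E (V - {c}))\<^sup>*\<^sup>* a1 a2"
        using nc cV unfolding sep_def by blast
      obtain a0 where a0: "a0 \<in> A" using Ane by blast
      have hA: "\<forall>a\<in>A. (rel E (V - {c}))\<^sup>*\<^sup>* a0 a" using all a0 by blast
      have nb: "(rel E (V - {c}))\<^sup>*\<^sup>* a0 x" if "{c, x} \<in> F" for x
        using prune[OF st cW cA a0 hA that] .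
      show False
      proof (rule replace[OF st Ane cW cA])
        fix x y assume x: "{c, x} \<in> F" and y: "{c, y} \<in> F" and xy: "x \<noteq> y"
        have "(rel E (V - {c}))\<^sup>*\<^sup>* x a0" by (rule rel_rtc_sym[OF nb[OF x]])
        then have "(rel E (V - {c}))\<^sup>*\<^sup>* x y" using nb[OF y] by (rule rtranclp_trans)
        moreover have "{c, x} \<in> E" "{c, y} \<in> E" using x y P(2) by blast+
        ultimately show "{x, y} \<in> E" using nbr_adj[of c x y] xy by blast
      qed
    qed
  qed
qed

lemma sep_cut: "c \<in> sep V E A \<Longrightarrow> A \<subseteq> V \<Longrightarrow> cut_vertex V E c"
  unfolding sep_def cut_vertex_def conn_on_rel by blast

end



context bgr
begin

lemma sep_sub: "sep V E A \<subseteq> V - A" unfolding sep_def by blast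

lemma ratio:
  assumes vV: "v \<in> V" and AV: "A \<subseteq> V - {v}" and Ane: "A \<noteq> {}"
  shows "real (card {(W, F) \<in> ST A. v \<in> W \<and> v \<notin> A}) / real (card (ST A))
         = (if v \<in> sep V E A then 1 else 0)"
proof -
  have vA: "v \<notin> A" using AV by blast
  have eq: "{(W, F) \<in> ST A. v \<in> W \<and> v \<notin> A} = {p \<in> ST A. v \<in> sep V E A}"
  proof
    show "{(W, F) \<in> ST A. v \<in> W \<and> v \<notin> A} \<subseteq> {p \<in> ST A. v \<in> sep V E A}"
    proof
      fix p assume p: "p \<in> {(W, F) \<in> ST A. v \<in> W \<and> v \<notin> A}"
      obtain W F where pe: "p = (W, F)" by (cases p)
      have st: "(W, F) \<in> ST A" and vW: "v \<in> W" using p pe by auto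
      have "W = A \<union> sep V E A" using W_char[OF st Ane] .
      then have "v \<in> sep V E A" using vW vA by blast
      then show "p \<in> {p \<in> ST A. v \<in> sep V E A}" using st pe by blast
    qed
    show "{p \<in> ST A. v \<in> sep V E A} \<subseteq> {(W, F) \<in> ST A. v \<in> W \<and> v \<notin> A}"
    proof
      fix p assume p: "p \<in> {p \<in> ST A. v \<in> sep V E A}"
      obtain W F where pe: "p = (W, F)" by (cases p)
      have st: "(W, F) \<in> ST A" and vs: "v \<in> sep V E A" using p pe by auto
      have "W = A \<union> sep V E A" using W_char[OF st Ane] .
      then have "v \<in> W" using vs by blast
      then show "p \<in> {(W, F) \<in> ST A. v \<in> W \<and> v \<notin> A}" using st pe vA by blast
    qed
  qed
  have AV': "A \<subseteq> V" using AV by blast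
  obtain W0 F0 where "(W0, F0) \<in> ST A" using st_ex[OF AV'] by blast
  then have pos: "card (ST A) > 0" using st_fin by (metis card_gt_0_iff empty_iff)
  show ?thesis
  proof (cases "v \<in> sep V E A")
    case True
    have "{p \<in> ST A. v \<in> sep V E A} = ST A" using True by blast
    then show ?thesis unfolding eq using True pos by simp
  next
    case False
    have "{p \<in> ST A. v \<in> sep V E A} = {}" using False by blast
    then show ?thesis unfolding eq using False by simp
  qed
qed

lemma dA:
  assumes AV: "A \<subseteq> V" and cA: "card A = k" and k: "2 \<le> k"
  shows "real (d A) = real (card (sep V E A)) + real k - 1"
proof -
  have Ane: "A \<noteq> {}" using cA k by auto
  obtain W F where st: "(W, F) \<in> ST A" using st_ex[OF AV] by blast
  have W: "W = A \<union> sep V E A" using W_char[OF st Ane] .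
  have fA: "finite A" using AV finV by (meson rev_finite_subset)
  have fS: "finite (sep V E A)" using sep_sub finV by (meson finite_Diff rev_finite_subset)
  have disj: "A \<inter> sep V E A = {}" using sep_sub by blast
  have cW: "card W = k + card (sep V E A)" unfolding W using card_Un_disjoint[OF fA fS disj] cA by simp
  have "d A = card F" using st_props(6)[OF st] by simp
  also have "\<dots> = card W - 1" using st_card[OF st Ane] .
  finally have "d A = k + card (sep V E A) - 1" using cW by simp
  then show ?thesis using k by simp
qed

lemma main:
  assumes k: "2 \<le> k"
  shows "real (steiner_wiener V E k) =
           (\<Sum>v\<in>{v. cut_vertex V E v}. steiner_betweenness V E k v)
           + (real k - 1) * real (card V choose k)"
proof -
  define Ak where "Ak = {A. A \<subseteq> V \<and> card A = k}"
  define Cut where "Cut = {v. cut_vertex V E v}"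
  define g where "g = (\<lambda>A v. if v \<in> sep V E A then (1::real) else 0)"
  have fAk: "finite Ak"
  proof -
    have "Ak \<subseteq> Pow V" unfolding Ak_def by blast
    then show ?thesis by (rule finite_subset) (simp add: finV)
  qed
  have fCut: "finite Cut"
  proof -
    have "Cut \<subseteq> V" unfolding Cut_def cut_vertex_def by blast
    then show ?thesis using finV by (meson rev_finite_subset)
  qed
  have cAk: "card Ak = card V choose k" unfolding Ak_def using finV by (rule n_subsets)
  have LHS: "real (steiner_wiener V E k) = (\<Sum>A\<in>Ak. real (card (sep V E A))) + real (card Ak) * (real k - 1)"
  proof -
    have "real (steiner_wiener V E k) = (\<Sum>A\<in>Ak. real (d A))"
      unfolding steiner_wiener_def Ak_def by simp
    also have "\<dots> = (\<Sum>A\<in>Ak. real (card (sep V E A)) + (real k - 1))"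
    proof (rule sum.cong)
      fix A assume "A \<in> Ak"
      then have "A \<subseteq> V" "card A = k" unfolding Ak_def by blast+
      then show "real (d A) = real (card (sep V E A)) + (real k - 1)" using dA k by simp
    qed simp
    also have "\<dots> = (\<Sum>A\<in>Ak. real (card (sep V E A))) + real (card Ak) * (real k - 1)"
      by (simp add: sum.distrib)
    finally show ?thesis .
  qed
  have B: "steiner_betweenness V E k v = (\<Sum>A\<in>Ak. g A v)" if v: "v \<in> Cut" for v
  proof -
    have vV: "v \<in> V" using v unfolding Cut_def cut_vertex_def by blast
    have "steiner_betweenness V E k v = (\<Sum>A\<in>{A. A \<subseteq> V - {v} \<and> card A = k}. g A v)"
      unfolding steiner_betweenness_def
    proof (rule sum.cong)
      fix A assume "A \<in> {A. A \<subseteq> V - {v} \<and> card A = k}"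
      then have A: "A \<subseteq> V - {v}" "card A = k" by blast+
      have "A \<noteq> {}" using A(2) k by auto
      then show "real (card {(W, F) \<in> ST A. v \<in> W \<and> v \<notin> A}) / real (card (ST A)) = g A v"
        unfolding g_def using ratio[OF vV A(1)] by blast
    qed simp
    also have "\<dots> = (\<Sum>A\<in>Ak. g A v)"
    proof (rule sum.mono_neutral_left[OF fAk])
      show "{A. A \<subseteq> V - {v} \<and> card A = k} \<subseteq> Ak" unfolding Ak_def by blast
      show "\<forall>i\<in>Ak - {A. A \<subseteq> V - {v} \<and> card A = k}. g i v = 0"
      proof
        fix A assume "A \<in> Ak - {A. A \<subseteq> V - {v} \<and> card A = k}"
        then have "v \<in> A" unfolding Ak_def by blast
        then have "v \<notin> sep V E A" using sep_sub by blast
        then show "g A v = 0" unfolding g_def by simp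
      qed
    qed
    finally show ?thesis .
  qed
  have "(\<Sum>v\<in>Cut. steiner_betweenness V E k v) = (\<Sum>v\<in>Cut. \<Sum>A\<in>Ak. g A v)"
    using B by (rule sum.cong[OF refl])
  also have "\<dots> = (\<Sum>A\<in>Ak. \<Sum>v\<in>Cut. g A v)" by (rule sum.swap)
  also have "\<dots> = (\<Sum>A\<in>Ak. real (card (sep V E A)))"
  proof (rule sum.cong[OF refl])
    fix A assume "A \<in> Ak"
    then have AV: "A \<subseteq> V" unfolding Ak_def by blast
    have sc: "sep V E A \<subseteq> Cut" unfolding Cut_def using sep_cut AV by blast
    have "(\<Sum>v\<in>Cut. g A v) = (\<Sum>v\<in>Cut \<inter> sep V E A. (1::real))"
      unfolding g_def using sum.inter_restrict[OF fCut, of "\<lambda>_. (1::real)" "sep V E A"] by simp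
    also have "Cut \<inter> sep V E A = sep V E A" using sc by blast
    finally show "(\<Sum>v\<in>Cut. g A v) = real (card (sep V E A))" by simp
  qed
  finally have R: "(\<Sum>v\<in>Cut. steiner_betweenness V E k v) = (\<Sum>A\<in>Ak. real (card (sep V E A)))" .
  show ?thesis unfolding LHS R[unfolded Cut_def] cAk by simp
qed

end


theorem mainTheorem5:
  fixes V :: "'a set" and E :: "'a set set" and k :: nat
  assumes "connected_graph V E"
    and "block_graph V E"
    and "2 \<le> k" and "k \<le> card V"
  shows "real (steiner_wiener V E k) =
           (\<Sum>v\<in>{v. cut_vertex V E v}. steiner_betweenness V E k v)
           + (real k - 1) * real (card V choose k)"
proof -
  interpret bgr V E using assms(1,2) by unfold_locales
  show ?thesis using main[OF assms(3)] .
qed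

end
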